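(* Let $n\ge 0$ and $k$ be integers, $\rho\ne0$ real and $0\le q<1$. Writing $B_{n,\rho,q}^{(k)}=B_{n,\rho,q}^{(k)}(0)$, we have $$B_{n,\rho,q}^{(k)}=\sum_{m=0}^n S_2(n,m)\frac{(-\rho)^{n-m}\,m!}{[m+1]_q^k},$$ where $S_2(n,m)$ are the Stirling numbers of the second kind.
   Context: For real $0\le q<1$ (with $0^0=1$), $[x]_q=\frac{1-q^x}{1-q}$. ${\rm Li}_{k,q}(w)=\sum_{m\ge1} w^m/[m]_q^k$. The $q$-poly-Bernoulli polynomials with parameter $\rho$ are defined by the formal power series identity in $t$: $\frac{\rho}{1-e^{-\rho t}}{\rm Li}_{k,q}\left(\frac{1-e^{-\rho t}}{\rho}\right)e^{-tz}=\sum_{n\ge0} B_{n,\rho,q}^{(k)}(z)\frac{t^n}{n!}$. *)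

theory Defs
  imports Complex_Main "HOL-Computational_Algebra.Formal_Power_Series" "HOL-Combinatorics.Stirling"
begin

definition qnum :: "real \<Rightarrow> nat \<Rightarrow> real" where
  "qnum q x = (1 - q ^ x) / (1 - q)"

definition qLi :: "int \<Rightarrow> real \<Rightarrow> real fps" where
  "qLi k q = Abs_fps (\<lambda>m. if m = 0 then 0 else 1 / (qnum q m) powi k)"

definition qpb_u :: "real \<Rightarrow> real fps" where
  "qpb_u \<rho> = fps_const (1 / \<rho>) * (1 - fps_exp (- \<rho>))"

text \<open>Generating function rho/(1-e^{-rho t}) Li_{k,q}((1-e^{-rho t})/rho) e^{-tz},
  written as Li(u)/u * e^{-tz}; the division is exact in the fps ring since u has
  subdegree 1 and Li(u) is divisible by u.\<close>
definition qpb_gen :: "int \<Rightarrow> real \<Rightarrow> real \<Rightarrow> real \<Rightarrow> real fps" where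
  "qpb_gen k \<rho> q z = ((qLi k q oo qpb_u \<rho>) / qpb_u \<rho>) * fps_exp (- z)"

definition qpolyBernoulli :: "nat \<Rightarrow> int \<Rightarrow> real \<Rightarrow> real \<Rightarrow> real \<Rightarrow> real" where
  "qpolyBernoulli n k \<rho> q z = fact n * fps_nth (qpb_gen k \<rho> q z) n"

end

theory Submission
  imports Defs
begin

unbundle fps_syntax

lemma u0: "qpb_u \<rho> $ 0 = 0"
  by (simp add: qpb_u_def)

lemma u1: "\<rho> \<noteq> 0 \<Longrightarrow> qpb_u \<rho> $ 1 = 1"
  by (simp add: qpb_u_def fps_exp_def)

lemma uderiv: "\<rho> \<noteq> 0 \<Longrightarrow> fps_deriv (qpb_u \<rho>) = 1 - fps_const \<rho> * qpb_u \<rho>"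
proof -
  assume r: "\<rho> \<noteq> 0"
  have "fps_deriv (qpb_u \<rho>) = fps_const (1/\<rho>) * (fps_const \<rho> * fps_exp (- \<rho>))"
    by (simp add: qpb_u_def flip: fps_const_neg)
  also have "\<dots> = fps_exp (- \<rho>)"
  proof -
    have c: "fps_const (1/\<rho>) * fps_const \<rho> = (1::real fps)"
      by (subst fps_const_mult) (simp add: r)
    show ?thesis using r by (simp add: mult.assoc[symmetric] c)
  qed
  also have "\<dots> = 1 - fps_const \<rho> * qpb_u \<rho>"
  proof -
    have c: "fps_const \<rho> * fps_const (1/\<rho>) = (1::real fps)"
      by (subst fps_const_mult) (simp add: r)
    show ?thesis using r by (simp add: qpb_u_def mult.assoc[symmetric] c)
  qed
  finally show ?thesis .
qed

lemma upow_rec: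
  assumes r: "\<rho> \<noteq> 0"
  shows "of_nat (n+1) * (qpb_u \<rho> ^ Suc m) $ (n+1)
     = of_nat (m+1) * ((qpb_u \<rho> ^ m) $ n - \<rho> * (qpb_u \<rho> ^ Suc m) $ n)"
proof -
  have "fps_deriv (qpb_u \<rho> ^ Suc m) = of_nat (Suc m) * (1 - fps_const \<rho> * qpb_u \<rho>) * qpb_u \<rho> ^ m"
    by (subst fps_deriv_power') (simp add: uderiv[OF r] del: power_Suc)
  also have "\<dots> = of_nat (Suc m) * (qpb_u \<rho> ^ m - fps_const \<rho> * qpb_u \<rho> ^ Suc m)"
    by (simp add: algebra_simps)
  finally have "fps_deriv (qpb_u \<rho> ^ Suc m) $ n = (of_nat (Suc m) * (qpb_u \<rho> ^ m - fps_const \<rho> * qpb_u \<rho> ^ Suc m)) $ n"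
    by (rule arg_cong[where f="\<lambda>f. f $ n"])
  thus ?thesis unfolding fps_deriv_nth
    by (simp add: fps_of_nat[symmetric] algebra_simps del: of_nat_Suc power_Suc)
qed

lemma upow_nth:
  assumes r: "\<rho> \<noteq> 0"
  shows "(qpb_u \<rho> ^ m) $ n = fact m * real (Stirling n m) * (- \<rho>) ^ n / ((- \<rho>) ^ m * fact n)"
proof (induction m arbitrary: n)
  case 0
  then show ?case by (cases n) auto
next
  case (Suc m)
  note IHm = Suc.IH
  show ?case
  proof (induction n)
    case 0
    then show ?case using u0 by (simp add: startsby_zero_power_prefix)
  next
    case (Suc n)
    have rec: "real (n+1) * (qpb_u \<rho> ^ Suc m) $ (n+1)
     = real (m+1) * ((qpb_u \<rho> ^ m) $ n - \<rho> * (qpb_u \<rho> ^ Suc m) $ n)"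
      using upow_rec[OF r] by simp
    have S: "real (Stirling (Suc n) (Suc m)) = real (Suc m) * real (Stirling n (Suc m)) + real (Stirling n m)"
      by (simp add: algebra_simps)
    have "(qpb_u \<rho> ^ Suc m) $ (n+1) = real (m+1) * ((qpb_u \<rho> ^ m) $ n - \<rho> * (qpb_u \<rho> ^ Suc m) $ n) / real (n+1)"
      using rec by (simp add: field_simps del: of_nat_Suc)
    also have "\<dots> = fact (Suc m) * real (Stirling (Suc n) (Suc m)) * (- \<rho>) ^ Suc n / ((- \<rho>) ^ Suc m * fact (Suc n))"
      unfolding S IHm Suc.IH using r
      by (simp add: divide_simps power_Suc del: of_nat_Suc) (simp add: algebra_simps)
    finally show ?case by simp
  qed
qed

theorem corollary1:
  fixes n :: nat and k :: int and \<rho> q :: real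
  assumes "\<rho> \<noteq> 0" and "0 \<le> q" and "q < 1"
  shows "qpolyBernoulli n k \<rho> q 0 =
    (\<Sum>m = 0..n. real (Stirling n m) * (- \<rho>) ^ (n - m) * fact m / (qnum q (m + 1)) powi k)"
proof -
  define L where "L = Abs_fps (\<lambda>m. 1 / (qnum q (m+1)) powi k)"
  define u where "u = qpb_u \<rho>"
  have u0': "u $ 0 = 0" by (simp add: u_def u0)
  have un: "u \<noteq> 0" using u1[OF assms(1)] by (auto simp: u_def)
  have Li: "qLi k q = fps_X * L"
    by (simp add: fps_eq_iff qLi_def L_def)
  have "qLi k q oo u = u * (L oo u)"
    unfolding Li fps_compose_mult_distrib[OF u0'] using u0' by simp
  hence G: "qpb_gen k \<rho> q 0 = L oo u"
    using un by (simp add: qpb_gen_def u_def[symmetric])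
  have "qpolyBernoulli n k \<rho> q 0 = fact n * (\<Sum>m=0..n. L $ m * (u ^ m) $ n)"
    by (simp add: qpolyBernoulli_def G fps_compose_nth)
  also have "\<dots> = (\<Sum>m=0..n. real (Stirling n m) * (- \<rho>) ^ (n - m) * fact m / (qnum q (m + 1)) powi k)"
    unfolding sum_distrib_left
  proof (rule sum.cong[OF refl])
    fix m assume "m \<in> {0..n}"
    hence mn: "m \<le> n" by simp
    have p: "(- \<rho>) ^ n = (- \<rho>) ^ (n-m) * (- \<rho>) ^ m"
      using mn by (simp add: power_add[symmetric])
    show "fact n * (L $ m * (u ^ m) $ n) = real (Stirling n m) * (- \<rho>) ^ (n - m) * fact m / (qnum q (m + 1)) powi k"
      unfolding u_def upow_nth[OF assms(1)] L_def p using assms(1)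
      by (simp add: field_simps)
  qed
  finally show ?thesis .
qed

end
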